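(* Let $\Gamma$ be a distance-regular graph with diameter $D\ge3$ and $a_1\ne0$. Let $\sigma_0,\dots,\sigma_D$ be a nontrivial pseudo cosine sequence which is tight, with auxiliary parameter $\varepsilon$, and write $\sigma=\sigma_1$. Then (i) $\sigma_2\ne1$; (ii) $\varepsilon\sigma\ne1$; (iii) $\sigma_2\ne\varepsilon\sigma$; (iv) $\sigma_2\ne\sigma^2$.
   Context: $\Gamma$ is a finite connected undirected graph without loops or multiple edges, distance-regular with diameter $D$, intersection numbers $a_i,b_i,c_i$ ($c_0=0$, $b_D=0$), valency $k$, $c_i+a_i+b_i=k$. For $\theta\in\mathbb{R}$ the pseudo cosine sequence for $\theta$ is the sequence of reals $\sigma_0,\dots,\sigma_D$ with $\sigma_0=1$ and $c_i\sigma_{i-1}+a_i\sigma_i+b_i\sigma_{i+1}=\theta\sigma_i$ for $0\le i\le D-1$; nontrivial means $\sigma_1\ne1$. Pseudo cosine sequences $\sigma_i$, $\rho_i$ form a tight pair if $(\sigma_i\rho_i)_{i=0}^D$ is a pseudo cosine sequence. For a tight pair of nontrivial pseudo cosine sequences, an auxiliary parameter is a real $\varepsilon$ with $\sigma_i\rho_i-\sigma_{i-1}\rho_{i-1}=\varepsilon(\sigma_{i-1}\rho_i-\sigma_i\rho_{i-1})$ for $1\le i\le D$. When $a_1\ne0$, a nontrivial pseudo cosine sequence $\sigma_0,\dots,\sigma_D$ is tight if some nontrivial pseudo cosine sequence $\rho_0,\dots,\rho_D$ forms a tight pair with it; its auxiliary parameter is the (uniquely determined) auxiliary parameter of that pair.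 *)

theory Defs
  imports Main "HOL.Real"
begin

definition simple_graph :: "'a set \<Rightarrow> ('a \<Rightarrow> 'a \<Rightarrow> bool) \<Rightarrow> bool" where
  "simple_graph V E \<longleftrightarrow> finite V \<and> V \<noteq> {} \<and>
     (\<forall>x y. E x y \<longrightarrow> x \<in> V \<and> y \<in> V \<and> x \<noteq> y \<and> E y x)"

definition adj_rel :: "'a set \<Rightarrow> ('a \<Rightarrow> 'a \<Rightarrow> bool) \<Rightarrow> ('a \<times> 'a) set" where
  "adj_rel V E = {(x, y). x \<in> V \<and> y \<in> V \<and> E x y}"

definition graph_connected :: "'a set \<Rightarrow> ('a \<Rightarrow> 'a \<Rightarrow> bool) \<Rightarrow> bool" where
  "graph_connected V E \<longleftrightarrow> (\<forall>x\<in>V. \<forall>y\<in>V. (x, y) \<in> (adj_rel V E)\<^sup>*)"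

definition gdist :: "'a set \<Rightarrow> ('a \<Rightarrow> 'a \<Rightarrow> bool) \<Rightarrow> 'a \<Rightarrow> 'a \<Rightarrow> nat" where
  "gdist V E x y = (LEAST n. (x, y) \<in> (adj_rel V E) ^^ n)"

definition diameter :: "'a set \<Rightarrow> ('a \<Rightarrow> 'a \<Rightarrow> bool) \<Rightarrow> nat" where
  "diameter V E = Max {gdist V E x y | x y. x \<in> V \<and> y \<in> V}"

text \<open>Distance-regular graph with diameter D and intersection numbers a i, b i, c i:
  for all vertices x, y at distance i (i \<le> D), the numbers of neighbours z of y at
  distance i-1, i, i+1 from x are c i, a i, b i respectively.  (For i = 0 the
  c-condition forces c 0 = 0; for i = D the b-condition forces b D = 0.)\<close>
definition distance_regular ::
  "'a set \<Rightarrow> ('a \<Rightarrow> 'a \<Rightarrow> bool) \<Rightarrow> nat \<Rightarrow> (nat \<Rightarrow> nat) \<Rightarrow> (nat \<Rightarrow> nat) \<Rightarrow> (nat \<Rightarrow> nat) \<Rightarrow> bool" where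
  "distance_regular V E D a b c \<longleftrightarrow>
     simple_graph V E \<and> graph_connected V E \<and> diameter V E = D \<and>
     (\<forall>i\<le>D. \<forall>x\<in>V. \<forall>y\<in>V. gdist V E x y = i \<longrightarrow>
        card {z\<in>V. E y z \<and> gdist V E x z + 1 = i} = c i \<and>
        card {z\<in>V. E y z \<and> gdist V E x z = i} = a i \<and>
        card {z\<in>V. E y z \<and> gdist V E x z = i + 1} = b i)"

definition pseudo_cosine_for ::
  "nat \<Rightarrow> (nat \<Rightarrow> nat) \<Rightarrow> (nat \<Rightarrow> nat) \<Rightarrow> (nat \<Rightarrow> nat) \<Rightarrow> real \<Rightarrow> (nat \<Rightarrow> real) \<Rightarrow> bool" where
  "pseudo_cosine_for D a b c \<theta> \<sigma> \<longleftrightarrow>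
     \<sigma> 0 = 1 \<and>
     (\<forall>i<D. real (c i) * \<sigma> (i - 1) + real (a i) * \<sigma> i + real (b i) * \<sigma> (i + 1) = \<theta> * \<sigma> i)"

definition pseudo_cosine ::
  "nat \<Rightarrow> (nat \<Rightarrow> nat) \<Rightarrow> (nat \<Rightarrow> nat) \<Rightarrow> (nat \<Rightarrow> nat) \<Rightarrow> (nat \<Rightarrow> real) \<Rightarrow> bool" where
  "pseudo_cosine D a b c \<sigma> \<longleftrightarrow> (\<exists>\<theta>. pseudo_cosine_for D a b c \<theta> \<sigma>)"

definition nontrivial_pcs :: "(nat \<Rightarrow> real) \<Rightarrow> bool" where
  "nontrivial_pcs \<sigma> \<longleftrightarrow> \<sigma> 1 \<noteq> 1"

definition tight_pair ::
  "nat \<Rightarrow> (nat \<Rightarrow> nat) \<Rightarrow> (nat \<Rightarrow> nat) \<Rightarrow> (nat \<Rightarrow> nat) \<Rightarrow> (nat \<Rightarrow> real) \<Rightarrow> (nat \<Rightarrow> real) \<Rightarrow> bool" where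
  "tight_pair D a b c \<sigma> \<rho> \<longleftrightarrow>
     pseudo_cosine D a b c \<sigma> \<and> pseudo_cosine D a b c \<rho> \<and>
     pseudo_cosine D a b c (\<lambda>i. \<sigma> i * \<rho> i)"

definition auxiliary_parameter ::
  "nat \<Rightarrow> (nat \<Rightarrow> real) \<Rightarrow> (nat \<Rightarrow> real) \<Rightarrow> real \<Rightarrow> bool" where
  "auxiliary_parameter D \<sigma> \<rho> \<epsilon> \<longleftrightarrow>
     (\<forall>i\<in>{1..D}. \<sigma> i * \<rho> i - \<sigma> (i - 1) * \<rho> (i - 1)
                  = \<epsilon> * (\<sigma> (i - 1) * \<rho> i - \<sigma> i * \<rho> (i - 1)))"

definition tight_with_aux ::
  "nat \<Rightarrow> (nat \<Rightarrow> nat) \<Rightarrow> (nat \<Rightarrow> nat) \<Rightarrow> (nat \<Rightarrow> nat) \<Rightarrow> (nat \<Rightarrow> real) \<Rightarrow> real \<Rightarrow> bool" where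
  "tight_with_aux D a b c \<sigma> \<epsilon> \<longleftrightarrow>
     pseudo_cosine D a b c \<sigma> \<and> nontrivial_pcs \<sigma> \<and>
     (\<exists>\<rho>. pseudo_cosine D a b c \<rho> \<and> nontrivial_pcs \<rho> \<and>
          tight_pair D a b c \<sigma> \<rho> \<and> auxiliary_parameter D \<sigma> \<rho> \<epsilon>)"

end

theory Submission imports Defs begin
lemma alg_i:
  fixes a1 b1 k a2 b2 c2 x s u y t v e :: real
  assumes a1: "a1 > 0" and b1: "b1 > 0" and k1: "k = 1 + a1 + b1"
    and a2: "a2 > 0" and b2: "b2 > 0" and c2: "c2 > 0" and k2: "k = a2 + b2 + c2"
    and x1: "x \<noteq> 1" and y1: "y \<noteq> 1"
    and H1: "1 + a1 * x + b1 * s = k * x * x"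
    and H2: "1 + a1 * y + b1 * t = k * y * y"
    and H3: "1 + a1 * (x * y) + b1 * (s * t) = k * (x * y) * (x * y)"
    and H4: "x * y - 1 = e * (y - x)"
    and H6: "u * v - s * t = e * (s * v - u * t)"
    and H8: "c2 * y + a2 * t + b2 * v = k * y * t"
    and H9: "c2 * (x * y) + a2 * (s * t) + b2 * (u * v) = k * (x * y) * (s * t)"
  shows "s \<noteq> 1"
proof
  assume s: "s = 1"
  have "(x - 1) * (k * x + k - a1) = 0" using H1 s k1 by algebra
  hence kx: "k * x + k - a1 = 0" using x1 by simp
  have "(x*y - y) * (k * (x*y + y) - a1) = 0" using H2 H3 s by algebra
  moreover have "k * (x*y + y) - a1 \<noteq> 0"
  proof
    assume "k * (x*y + y) - a1 = 0"
    hence "a1 * (y - 1) = 0" using kx by algebra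
    thus False using a1 y1 by simp
  qed
  ultimately have "x*y - y = 0" by simp
  hence "y * (x - 1) = 0" by algebra
  hence y0: "y = 0" using x1 by simp
  have t: "b1 * t = -1" using H2 y0 by simp
  have "b2 * v * (u - 1) = 0" using H8 H9 y0 s by algebra
  hence "v = 0 \<or> u = 1" using b2 by simp
  thus False
  proof
    assume "v = 0" thus False using H8 y0 t a2 by auto
  next
    assume u: "u = 1"
    have ex: "e * x = 1" using H4 y0 by simp
    have "(e - 1) * (v - t) = 0" using H6 u s by algebra
    moreover have "e \<noteq> 1" using ex x1 by auto
    ultimately have "v = t" by simp
    hence "t * (a2 + b2) = 0" using H8 y0 by (simp add: algebra_simps)
    thus False using t a2 b2 by auto
  qed
qed

lemma alg_all:
  fixes a1 b1 k a2 b2 c2 x s u y t v e :: real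
  assumes a1: "a1 > 0" and b1: "b1 > 0" and k1: "k = 1 + a1 + b1"
    and a2: "a2 > 0" and b2: "b2 > 0" and c2: "c2 > 0" and k2: "k = a2 + b2 + c2"
    and x1: "x \<noteq> 1" and y1: "y \<noteq> 1"
    and H1: "1 + a1 * x + b1 * s = k * x * x"
    and H2: "1 + a1 * y + b1 * t = k * y * y"
    and H3: "1 + a1 * (x * y) + b1 * (s * t) = k * (x * y) * (x * y)"
    and H4: "x * y - 1 = e * (y - x)"
    and H5: "s * t - x * y = e * (x * t - s * y)"
    and H6: "u * v - s * t = e * (s * v - u * t)"
    and H7: "c2 * x + a2 * s + b2 * u = k * x * s"
    and H8: "c2 * y + a2 * t + b2 * v = k * y * t"
    and H9: "c2 * (x * y) + a2 * (s * t) + b2 * (u * v) = k * (x * y) * (s * t)"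
  shows "s \<noteq> 1 \<and> e * x \<noteq> 1 \<and> s \<noteq> e * x \<and> s \<noteq> x\<^sup>2"
proof (intro conjI)
  show si: "s \<noteq> 1" by (rule alg_i[OF assms(1-9) H1 H2 H3 H4 H6 H8 H9])
  have y0: "y \<noteq> 0"
  proof
    assume y: "y = 0"
    have "b1 * t * (s - 1) = 0" using H2 H3 y by algebra
    moreover have "t \<noteq> 0" using H2 y by auto
    ultimately show False using si b1 by simp
  qed
  show "s \<noteq> x\<^sup>2"
  proof
    assume s: "s = x\<^sup>2"
    have "(x - 1) * ((1 + a1) * x + 1) = 0" using H1 s k1 by (simp add: power2_eq_square) algebra
    hence ax: "(1 + a1) * x = -1" using x1 by simp
    have "(1 - x) * (1 + x + a1 * x * y) = 0" using H2 H3 s by (simp add: power2_eq_square) algebra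
    hence "1 + x + a1 * x * y = 0" using x1 by simp
    hence "a1 * (1 - y) = 0" using ax by algebra
    thus False using a1 y1 by simp
  qed
  show "e * x \<noteq> 1"
  proof
    assume ex: "e * x = 1"
    have "y * (x - e) = 0" using H4 ex by algebra
    hence xe: "x = e" using y0 by simp
    have "(x - 1) * (x + 1) = 0" using ex xe by algebra
    hence xm: "x = -1" using x1 by simp
    have em: "e = -1" using xe xm by simp
    have "b1 * (s - 1) = 2 * a1" using H1 xm k1 by algebra
    hence "b1 * (s - 1) > 0" using a1 by simp
    hence s1: "s > 1" using b1 by (simp add: zero_less_mult_iff)
    have "(s - 1) * (t - y) = 0" using H5 xm em by algebra
    hence ty: "t = y" using s1 by simp
    have "(y - 1) * (k * y + 1) = 0" using H2 ty k1 by algebra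
    hence ky: "k * y = -1" using y1 by algebra
    have yneg: "y < 0" using ky k1 a1 b1
      by (smt (verit, best) mult_nonneg_nonneg)
    have "b2 * v = - y * (1 + c2 + a2)" using H8 ty ky by algebra
    moreover have "- y * (1 + c2 + a2) > 0" using yneg a2 c2 by (intro mult_pos_pos) auto
    ultimately have "b2 * v > 0" by simp
    hence vpos: "v > 0" using b2 by (simp add: zero_less_mult_iff)
    have "(u + s) * (v - y) = 0" using H6 em ty by algebra
    hence us: "u = - s" using vpos yneg by simp
    have "s * (2 * a2 + c2) = c2" using H7 xm us k2 by algebra
    moreover have "s * (2 * a2 + c2) > 1 * (2 * a2 + c2)"
      using s1 a2 c2 by (intro mult_strict_right_mono) auto
    ultimately show False using a2 by simp
  qed
  show "s \<noteq> e * x"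
  proof
    assume se: "s = e * x"
    have "y * (x - e * s) = 0" using H5 se by algebra
    hence "x = e * s" using y0 by simp
    hence "x * (e - 1) * (e + 1) = 0" using se by algebra
    moreover have "x \<noteq> 0" using H1 se by auto
    ultimately have "e - 1 = 0 \<or> e + 1 = 0" by simp
    hence "e = 1 \<or> e = -1" by linarith
    thus False
    proof
      assume e1: "e = 1"
      hence sx: "s = x" using se by simp
      have "(x - 1) * (y + 1) = 0" using H4 e1 by algebra
      hence ym: "y = -1" using x1 by simp
      have "(x - 1) * (k * x + 1) = 0" using H1 sx k1 by algebra
      hence kx: "k * x = -1" using x1 by algebra
      have xneg: "x < 0" using kx k1 a1 b1
        by (smt (verit, best) mult_nonneg_nonneg)
      have "b1 * (t - 1) = 2 * a1" using H2 ym k1 by algebra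
      hence "b1 * (t - 1) > 0" using a1 by simp
    hence t1: "t > 1" using b1 by (simp add: zero_less_mult_iff)
      have "b2 * u = - x * (1 + c2 + a2)" using H7 sx kx by algebra
      moreover have "- x * (1 + c2 + a2) > 0" using xneg a2 c2 by (intro mult_pos_pos) auto
    ultimately have "b2 * u > 0" by simp
      hence upos: "u > 0" using b2 by (simp add: zero_less_mult_iff)
      have "(u - x) * (v + t) = 0" using H6 e1 sx by algebra
      hence vt: "v = - t" using upos xneg by simp
      have "t * (2 * a2 + c2) = c2" using H8 ym vt k2 by algebra
      moreover have "t * (2 * a2 + c2) > 1 * (2 * a2 + c2)"
        using t1 a2 c2 by (intro mult_strict_right_mono) auto
      ultimately show False using a2 by simp
    next
      assume em: "e = -1"
      have "(x + 1) * (y - 1) = 0" using H4 em by algebra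
      hence "x = -1" using y1 by simp
      thus False using se em si by simp
    qed
  qed
qed
lemma relpow_sym:
  assumes sym: "\<And>x y. (x, y) \<in> R \<Longrightarrow> (y, x) \<in> R"
  shows "(x, y) \<in> R ^^ n \<Longrightarrow> (y, x) \<in> R ^^ n"
proof (induction n arbitrary: x y)
  case 0 thus ?case by simp
next
  case (Suc n)
  from Suc.prems obtain z where xz: "(x, z) \<in> R ^^ n" and zy: "(z, y) \<in> R"
    by (rule relpow_Suc_E)
  have "(z, x) \<in> R ^^ n" using Suc.IH xz by blast
  moreover have "(y, z) \<in> R" using sym zy .
  ultimately show ?case using relpow_Suc_I2 by metis
qed

locale cg =
  fixes V :: "'v set" and E :: "'v \<Rightarrow> 'v \<Rightarrow> bool"
  assumes sg: "simple_graph V E" and con: "graph_connected V E"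
begin

abbreviation "R \<equiv> adj_rel V E"
abbreviation "d \<equiv> gdist V E"

lemma E_V: "E x y \<Longrightarrow> x \<in> V \<and> y \<in> V \<and> x \<noteq> y \<and> E y x"
  using sg unfolding simple_graph_def by blast

lemma finV: "finite V" using sg unfolding simple_graph_def by blast

lemma reach: "x \<in> V \<Longrightarrow> y \<in> V \<Longrightarrow> (x, y) \<in> R ^^ d x y"
proof -
  assume "x \<in> V" "y \<in> V"
  hence "(x, y) \<in> R\<^sup>*" using con unfolding graph_connected_def by blast
  then obtain n where "(x, y) \<in> R ^^ n" using rtrancl_power by blast
  thus ?thesis unfolding gdist_def by (rule LeastI)
qed

lemma d_le: "(x, y) \<in> R ^^ n \<Longrightarrow> d x y \<le> n"
  unfolding gdist_def by (rule Least_le)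

lemma d_refl: "d x x = 0"
  using d_le[of x x 0] by simp

lemma d_0: "x \<in> V \<Longrightarrow> y \<in> V \<Longrightarrow> d x y = 0 \<Longrightarrow> x = y"
  using reach[of x y] by simp

lemma d_E: "E x y \<Longrightarrow> d x y = 1"
proof -
  assume e: "E x y"
  hence "(x, y) \<in> R ^^ 1" using E_V unfolding adj_rel_def by auto
  hence "d x y \<le> 1" by (rule d_le)
  moreover have "d x y \<noteq> 0" using d_0 E_V e by blast
  ultimately show ?thesis by simp
qed

lemma d_1: "x \<in> V \<Longrightarrow> y \<in> V \<Longrightarrow> d x y = 1 \<Longrightarrow> E x y"
  using reach[of x y] unfolding adj_rel_def by simp

lemma d_tri: "x \<in> V \<Longrightarrow> y \<in> V \<Longrightarrow> z \<in> V \<Longrightarrow> d x z \<le> d x y + d y z"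
proof -
  assume V: "x \<in> V" "y \<in> V" "z \<in> V"
  have "(x, z) \<in> R ^^ d x y O R ^^ d y z" using reach V by blast
  hence "(x, z) \<in> R ^^ (d x y + d y z)" by (simp add: relpow_add)
  thus ?thesis by (rule d_le)
qed

lemma d_sym: "x \<in> V \<Longrightarrow> y \<in> V \<Longrightarrow> d x y = d y x"
proof -
  assume V: "x \<in> V" "y \<in> V"
  have s: "\<And>a b. (a, b) \<in> R \<Longrightarrow> (b, a) \<in> R" using E_V unfolding adj_rel_def by auto
  have "(y, x) \<in> R ^^ d x y" using relpow_sym[OF s] reach V by blast
  hence "d y x \<le> d x y" by (rule d_le)
  moreover have "(x, y) \<in> R ^^ d y x" using relpow_sym[OF s] reach V by blast
  hence "d x y \<le> d y x" by (rule d_le)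
  ultimately show ?thesis by simp
qed

lemma d_step: "x \<in> V \<Longrightarrow> y \<in> V \<Longrightarrow> d x y = Suc n \<Longrightarrow> \<exists>z\<in>V. E z y \<and> d x z = n"
proof -
  assume V: "x \<in> V" "y \<in> V" and dn: "d x y = Suc n"
  have "(x, y) \<in> R ^^ Suc n" using reach V dn by metis
  then obtain z where xz: "(x, z) \<in> R ^^ n" and zy: "(z, y) \<in> R" by (rule relpow_Suc_E)
  have zV: "z \<in> V" and ezy: "E z y" using zy unfolding adj_rel_def by auto
  have "d x z \<le> n" using xz by (rule d_le)
  moreover have "d x y \<le> d x z + d z y" using d_tri V zV by blast
  ultimately have "d x z = n" using dn d_E[OF ezy] by simp
  thus ?thesis using zV ezy by blast
qed

lemma d_down: "x \<in> V \<Longrightarrow> y \<in> V \<Longrightarrow> d x y = m \<Longrightarrow> j \<le> m \<Longrightarrow> \<exists>z\<in>V. d x z = j"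
proof (induction m arbitrary: y)
  case 0 thus ?case by auto
next
  case (Suc m)
  show ?case
  proof (cases "j = Suc m")
    case True thus ?thesis using Suc.prems by blast
  next
    case False
    obtain z where "z \<in> V" "d x z = m" using d_step Suc.prems by blast
    thus ?thesis using Suc.IH Suc.prems False by simp
  qed
qed


lemma diam_attained:
  assumes "diameter V E = D"
  shows "\<exists>p\<in>V. \<exists>w\<in>V. d p w = D"
proof -
  have S: "{d x y | x y. x \<in> V \<and> y \<in> V} = (\<lambda>(x, y). d x y) ` (V \<times> V)" by auto
  have fin: "finite {d x y | x y. x \<in> V \<and> y \<in> V}" unfolding S using finV by simp
  have ne: "{d x y | x y. x \<in> V \<and> y \<in> V} \<noteq> {}" using sg unfolding simple_graph_def by blast
  have "Max {d x y | x y. x \<in> V \<and> y \<in> V} \<in> {d x y | x y. x \<in> V \<and> y \<in> V}"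
    using Max_in[OF fin ne] .
  then obtain x y where "Max {d x y | x y. x \<in> V \<and> y \<in> V} = d x y" "x \<in> V" "y \<in> V" by blast
  thus ?thesis using assms unfolding diameter_def by metis
qed

lemma card_pos: "z \<in> {w \<in> V. P w} \<Longrightarrow> card {w \<in> V. P w} > 0"
  using finV by (subst card_gt_0_iff) auto

lemma drg_facts:
  assumes diam: "diameter V E = D" and D3: "D \<ge> 3" and a1: "a 1 \<noteq> 0"
    and DR: "\<forall>i\<le>D. \<forall>x\<in>V. \<forall>y\<in>V. d x y = i \<longrightarrow>
        card {z\<in>V. E y z \<and> d x z + 1 = i} = c i \<and>
        card {z\<in>V. E y z \<and> d x z = i} = a i \<and>
        card {z\<in>V. E y z \<and> d x z = i + 1} = b i"
  shows "c 0 = 0 \<and> a 0 = 0 \<and> c 1 = 1 \<and> b 0 = c 1 + a 1 + b 1 \<and> b 0 = c 2 + a 2 + b 2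
     \<and> b 1 > 0 \<and> c 2 > 0 \<and> b 2 > 0 \<and> a 2 > 0"
proof -
  have DRc: "\<And>i x y. i \<le> D \<Longrightarrow> x \<in> V \<Longrightarrow> y \<in> V \<Longrightarrow> d x y = i \<Longrightarrow> card {z\<in>V. E y z \<and> d x z + 1 = i} = c i"
    using DR by blast
  have DRa: "\<And>i x y. i \<le> D \<Longrightarrow> x \<in> V \<Longrightarrow> y \<in> V \<Longrightarrow> d x y = i \<Longrightarrow> card {z\<in>V. E y z \<and> d x z = i} = a i"
    using DR by blast
  have DRb: "\<And>i x y. i \<le> D \<Longrightarrow> x \<in> V \<Longrightarrow> y \<in> V \<Longrightarrow> d x y = i \<Longrightarrow> card {z\<in>V. E y z \<and> d x z = i + 1} = b i"
    using DR by blast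
  obtain p w where pV: "p \<in> V" and wV: "w \<in> V" and pw: "d p w = D" using diam_attained[OF diam] by blast
  obtain z3 where z3V: "z3 \<in> V" and d3: "d p z3 = 3" using d_down[OF pV wV pw D3] by blast
  obtain z2 where z2V: "z2 \<in> V" and e23: "E z2 z3" and d2: "d p z2 = 2"
    using d_step[OF pV z3V, of 2] d3 by auto
  obtain z1 where z1V: "z1 \<in> V" and e12: "E z1 z2" and d1: "d p z1 = 1"
    using d_step[OF pV z2V, of 1] d2 by auto
  have ep1: "E p z1" using d_1 pV z1V d1 by blast
  have deg: "card {z\<in>V. E y z} = b 0" if yV: "y \<in> V" for y
  proof -
    have "card {z\<in>V. E y z \<and> d y z = 0 + 1} = b 0" using DR yV d_refl by auto
    moreover have "{z\<in>V. E y z \<and> d y z = 0 + 1} = {z\<in>V. E y z}" using d_E by auto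
    ultimately show ?thesis by simp
  qed
  have c0: "c 0 = 0" using DR pV d_refl[of p] by force
  have a0: "a 0 = 0"
  proof -
    have "card {z\<in>V. E p z \<and> d p z = 0} = a 0" using DR pV d_refl[of p] by force
    moreover have "{z\<in>V. E p z \<and> d p z = 0} = {}" using d_0 pV E_V by blast
    ultimately show ?thesis by simp
  qed
  have part: "b 0 = c i + a i + b i" if iD: "i \<le> D" and xV: "x \<in> V" and yV: "y \<in> V"
    and dxy: "d x y = i" for i x y
  proof -
    let ?A = "{z\<in>V. E y z \<and> d x z + 1 = i}"
    let ?B = "{z\<in>V. E y z \<and> d x z = i}"
    let ?C = "{z\<in>V. E y z \<and> d x z = i + 1}"
    have "{z\<in>V. E y z} = ?A \<union> ?B \<union> ?C"
    proof (rule set_eqI, rule iffI)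
      fix z assume "z \<in> {z\<in>V. E y z}"
      hence zV: "z \<in> V" and eyz: "E y z" by auto
      have "d x z \<le> d x y + d y z" using d_tri xV yV zV by blast
      moreover have "d x y \<le> d x z + d z y" using d_tri xV yV zV by blast
      moreover have "d y z = 1" "d z y = 1" using d_E eyz E_V by auto
      ultimately show "z \<in> ?A \<union> ?B \<union> ?C" using zV eyz dxy by auto
    qed auto
    moreover have "finite ?A" "finite ?B" "finite ?C" using finV by auto
    ultimately have "card {z\<in>V. E y z} = card ?A + card ?B + card ?C"
      by (simp add: card_Un_disjoint Int_def) (subst card_Un_disjoint; auto)+
    thus ?thesis using deg yV DR iD xV dxy by auto
  qed
  have k1: "b 0 = c 1 + a 1 + b 1" using part[OF _ pV z1V d1] D3 by simp
  have k2: "b 0 = c 2 + a 2 + b 2" using part[OF _ pV z2V d2] D3 by simp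
  have c1: "c 1 = 1"
  proof -
    have "card {z\<in>V. E z1 z \<and> d p z + 1 = 1} = c 1" using DRc[OF _ pV z1V d1] D3 by simp
    moreover have "{z\<in>V. E z1 z \<and> d p z + 1 = 1} = {p}"
      using d_0 pV ep1 E_V d_refl by auto
    ultimately show ?thesis by simp
  qed
  have b1: "b 1 > 0"
  proof -
    have "card {z\<in>V. E z1 z \<and> d p z = 1 + 1} = b 1" using DRb[OF _ pV z1V d1] D3 by simp
    moreover have "card {z\<in>V. E z1 z \<and> d p z = 1 + 1} > 0" using z2V e12 d2 by (intro card_pos) auto
    ultimately show ?thesis by simp
  qed
  have c2: "c 2 > 0"
  proof -
    have "card {z\<in>V. E z2 z \<and> d p z + 1 = 2} = c 2" using DRc[OF _ pV z2V d2] D3 by simp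
    moreover have "card {z\<in>V. E z2 z \<and> d p z + 1 = 2} > 0" using z1V e12 E_V d1 by (intro card_pos) auto
    ultimately show ?thesis by simp
  qed
  have b2: "b 2 > 0"
  proof -
    have "card {z\<in>V. E z2 z \<and> d p z = 2 + 1} = b 2" using DRb[OF _ pV z2V d2] D3 by simp
    moreover have "card {z\<in>V. E z2 z \<and> d p z = 2 + 1} > 0" using z3V e23 d3 by (intro card_pos) auto
    ultimately show ?thesis by simp
  qed
  have a2: "a 2 > 0"
  proof (rule ccontr)
    assume "\<not> a 2 > 0"
    hence a20: "a 2 = 0" by simp
    have d21: "d z2 z1 = 1" using d_E e12 E_V by blast
    have "card {z\<in>V. E z1 z \<and> d z2 z = 1} = a 1" using DRa[OF _ z2V z1V d21] D3 by simp
    hence "{z\<in>V. E z1 z \<and> d z2 z = 1} \<noteq> {}" using a1 by (metis card.empty)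
    then obtain v where vV: "v \<in> V" and e1v: "E z1 v" and d2v: "d z2 v = 1" by blast
    have e2v: "E z2 v" using d_1 z2V vV d2v by blast
    have "card {z\<in>V. E z2 z \<and> d p z = 2} = a 2" using DRa[OF _ pV z2V d2] D3 by simp
    hence "{z\<in>V. E z2 z \<and> d p z = 2} = {}" using a20 finV by simp
    hence "d p v \<noteq> 2" using vV e2v by blast
    moreover have "d p v \<le> d p z1 + d z1 v" using d_tri pV z1V vV by blast
    ultimately have dpv: "d p v \<le> 1" using d1 d_E[OF e1v] by simp
    have d31a: "d z3 z1 \<le> d z3 z2 + d z2 z1" using d_tri z3V z2V z1V by blast
    have d32: "d z3 z2 = 1" using d_E e23 E_V by blast
    have "d p z3 \<le> d p z1 + d z1 z3" using d_tri pV z1V z3V by blast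
    hence "d z1 z3 \<ge> 2" using d1 d3 by simp
    hence d31: "d z3 z1 = 2" using d31a d32 d21 d_sym z1V z3V by simp
    have "card {z\<in>V. E z1 z \<and> d z3 z = 2} = a 2" using DRa[OF _ z3V z1V d31] D3 by simp
    hence "{z\<in>V. E z1 z \<and> d z3 z = 2} = {}" using a20 finV by simp
    hence n2: "d z3 v \<noteq> 2" using vV e1v by blast
    have "d z3 v \<le> d z3 z2 + d z2 v" using d_tri z3V z2V vV by blast
    moreover have "d p z3 \<le> d p v + d v z3" using d_tri pV vV z3V by blast
    moreover have "d v z3 = d z3 v" using d_sym vV z3V by blast
    ultimately show False using n2 d32 d2v d3 dpv by simp
  qed
  show ?thesis using c0 a0 c1 k1 k2 b1 c2 b2 a2 by simp
qed

end

theorem lemma12p4: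
  fixes V :: "'v set" and E :: "'v \<Rightarrow> 'v \<Rightarrow> bool"
    and D :: nat and a b c :: "nat \<Rightarrow> nat"
    and \<sigma> :: "nat \<Rightarrow> real" and \<epsilon> :: real
  assumes "distance_regular V E D a b c"
    and "D \<ge> 3"
    and "a 1 \<noteq> 0"
    and "pseudo_cosine D a b c \<sigma>"
    and "nontrivial_pcs \<sigma>"
    and "tight_with_aux D a b c \<sigma> \<epsilon>"
  shows "\<sigma> 2 \<noteq> 1 \<and> \<epsilon> * \<sigma> 1 \<noteq> 1 \<and> \<sigma> 2 \<noteq> \<epsilon> * \<sigma> 1 \<and> \<sigma> 2 \<noteq> (\<sigma> 1)\<^sup>2"
proof -
  have sg: "simple_graph V E" and con: "graph_connected V E" and diam: "diameter V E = D"
    and DR: "\<forall>i\<le>D. \<forall>x\<in>V. \<forall>y\<in>V. gdist V E x y = i \<longrightarrow>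
        card {z\<in>V. E y z \<and> gdist V E x z + 1 = i} = c i \<and>
        card {z\<in>V. E y z \<and> gdist V E x z = i} = a i \<and>
        card {z\<in>V. E y z \<and> gdist V E x z = i + 1} = b i"
    using assms(1) unfolding distance_regular_def by blast+
  interpret cg V E using sg con by unfold_locales
  have F: "c 0 = 0 \<and> a 0 = 0 \<and> c 1 = 1 \<and> b 0 = c 1 + a 1 + b 1 \<and> b 0 = c 2 + a 2 + b 2
     \<and> b 1 > 0 \<and> c 2 > 0 \<and> b 2 > 0 \<and> a 2 > 0"
    using drg_facts[OF diam assms(2) assms(3) DR] .
  obtain \<rho> where rpc: "pseudo_cosine D a b c \<rho>" and rnt: "nontrivial_pcs \<rho>"
    and tp: "tight_pair D a b c \<sigma> \<rho>" and ap: "auxiliary_parameter D \<sigma> \<rho> \<epsilon>"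
    using assms(6) unfolding tight_with_aux_def by blast
  obtain th1 where P1: "pseudo_cosine_for D a b c th1 \<sigma>" using assms(4) unfolding pseudo_cosine_def by blast
  obtain th2 where P2: "pseudo_cosine_for D a b c th2 \<rho>" using rpc unfolding pseudo_cosine_def by blast
  obtain th3 where P3: "pseudo_cosine_for D a b c th3 (\<lambda>i. \<sigma> i * \<rho> i)"
    using tp unfolding tight_pair_def pseudo_cosine_def by blast
  have D0: "0 < D" "1 < D" "2 < D" using assms(2) by auto
  have R: "\<And>f th. pseudo_cosine_for D a b c th f \<Longrightarrow>
     f 0 = 1 \<and> th = real (b 0) * f 1 \<and>
     real (c 1) * f 0 + real (a 1) * f 1 + real (b 1) * f 2 = th * f 1 \<and>
     real (c 2) * f 1 + real (a 2) * f 2 + real (b 2) * f 3 = th * f 2"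
  proof -
    fix f th assume P: "pseudo_cosine_for D a b c th f"
    hence f0: "f 0 = 1" and rec: "\<And>i. i < D \<Longrightarrow> real (c i) * f (i - 1) + real (a i) * f i + real (b i) * f (i + 1) = th * f i"
      unfolding pseudo_cosine_for_def by auto
    have "th = real (b 0) * f 1" using rec[OF D0(1)] f0 F[THEN conjunct1] F[THEN conjunct2, THEN conjunct1] by simp
    moreover have "real (c 1) * f 0 + real (a 1) * f 1 + real (b 1) * f 2 = th * f 1" using rec[OF D0(2)] by (simp add: numeral_2_eq_2)
    moreover have "real (c 2) * f 1 + real (a 2) * f 2 + real (b 2) * f 3 = th * f 2"
      using rec[OF D0(3)] by (simp add: numeral_2_eq_2 numeral_3_eq_3)
    ultimately show "f 0 = 1 \<and> th = real (b 0) * f 1 \<and>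
     real (c 1) * f 0 + real (a 1) * f 1 + real (b 1) * f 2 = th * f 1 \<and>
     real (c 2) * f 1 + real (a 2) * f 2 + real (b 2) * f 3 = th * f 2" using f0 by blast
  qed
  note R1 = R[OF P1] and R2 = R[OF P2] and R3 = R[OF P3]
  have A: "\<And>i. i \<in> {1..D} \<Longrightarrow> \<sigma> i * \<rho> i - \<sigma> (i - 1) * \<rho> (i - 1)
                  = \<epsilon> * (\<sigma> (i - 1) * \<rho> i - \<sigma> i * \<rho> (i - 1))"
    using ap unfolding auxiliary_parameter_def by blast
  have A1: "\<sigma> 1 * \<rho> 1 - \<sigma> 0 * \<rho> 0 = \<epsilon> * (\<sigma> 0 * \<rho> 1 - \<sigma> 1 * \<rho> 0)" using A[of 1] D0 by simp
  have A2: "\<sigma> 2 * \<rho> 2 - \<sigma> 1 * \<rho> 1 = \<epsilon> * (\<sigma> 1 * \<rho> 2 - \<sigma> 2 * \<rho> 1)" using A[of 2] D0 by simp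
  have A3: "\<sigma> 3 * \<rho> 3 - \<sigma> 2 * \<rho> 2 = \<epsilon> * (\<sigma> 2 * \<rho> 3 - \<sigma> 3 * \<rho> 2)"
    using A[of 3] assms(2) by (simp add: numeral_3_eq_3 numeral_2_eq_2)
  have k1: "real (b 0) = 1 + real (a 1) + real (b 1)" using F by simp
  have k2: "real (b 0) = real (a 2) + real (b 2) + real (c 2)" using F by simp
  have c1: "real (c 1) = 1" using F by simp
  show ?thesis
  proof (rule alg_all[where k = "real (b 0)" and u = "\<sigma> 3" and v = "\<rho> 3"])
    show "real (a 1) > 0" using assms(3) by simp
    show "real (b 1) > 0" "real (a 2) > 0" "real (b 2) > 0" "real (c 2) > 0" using F by auto
    show "real (b 0) = 1 + real (a 1) + real (b 1)" by (rule k1)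
    show "real (b 0) = real (a 2) + real (b 2) + real (c 2)" by (rule k2)
    show "\<sigma> 1 \<noteq> 1" using assms(5) unfolding nontrivial_pcs_def .
    show "\<rho> 1 \<noteq> 1" using rnt unfolding nontrivial_pcs_def .
    show "1 + real (a 1) * \<sigma> 1 + real (b 1) * \<sigma> 2 = real (b 0) * \<sigma> 1 * \<sigma> 1"
      using R1 c1 by algebra
    show "1 + real (a 1) * \<rho> 1 + real (b 1) * \<rho> 2 = real (b 0) * \<rho> 1 * \<rho> 1"
      using R2 c1 by algebra
    show "1 + real (a 1) * (\<sigma> 1 * \<rho> 1) + real (b 1) * (\<sigma> 2 * \<rho> 2)
        = real (b 0) * (\<sigma> 1 * \<rho> 1) * (\<sigma> 1 * \<rho> 1)"
      using R3 R1 R2 c1 by algebra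
    show "\<sigma> 1 * \<rho> 1 - 1 = \<epsilon> * (\<rho> 1 - \<sigma> 1)" using A1 R1 R2 by simp
    show "\<sigma> 2 * \<rho> 2 - \<sigma> 1 * \<rho> 1 = \<epsilon> * (\<sigma> 1 * \<rho> 2 - \<sigma> 2 * \<rho> 1)" by (rule A2)
    show "\<sigma> 3 * \<rho> 3 - \<sigma> 2 * \<rho> 2 = \<epsilon> * (\<sigma> 2 * \<rho> 3 - \<sigma> 3 * \<rho> 2)" by (rule A3)
    show "real (c 2) * \<sigma> 1 + real (a 2) * \<sigma> 2 + real (b 2) * \<sigma> 3 = real (b 0) * \<sigma> 1 * \<sigma> 2"
      using R1 by algebra
    show "real (c 2) * \<rho> 1 + real (a 2) * \<rho> 2 + real (b 2) * \<rho> 3 = real (b 0) * \<rho> 1 * \<rho> 2"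
      using R2 by algebra
    show "real (c 2) * (\<sigma> 1 * \<rho> 1) + real (a 2) * (\<sigma> 2 * \<rho> 2) + real (b 2) * (\<sigma> 3 * \<rho> 3)
        = real (b 0) * (\<sigma> 1 * \<rho> 1) * (\<sigma> 2 * \<rho> 2)"
      using R3 by algebra
  qed
qed

end
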